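(* Let $\mathrm{H}$ be a set of Horn rules and let $\mathrm{H}'\subseteq\mathrm H$ be a fracturable subset of the dependency graph $\mathsf{DG}(\mathrm{H})$. Then $\mathrm{H}\setminus\mathrm{H}'$ permutes above $\mathrm{H}'$.
   Context: Fix a non-empty finite set $\mathtt{E}$ of edge types and a countably infinite set $\mathtt S$ of sequents (atomic labels). A g-sequent is a finite directed graph with vertices in a universe $\mathcal U$, edge relations $\mathcal{E}_a$ for $a\in\mathtt{E}$, and a labelling of vertices by sequents; it is written $\Gamma\vdash\Delta$ with $\Gamma$ the set of edge atoms $w\mathcal{E}_a u$ and $\Delta$ the set of prefixed sequents $w:S$; commas denote disjoint union. Let $\overline{\mathtt E}=\{\bar a\mid a\in\mathtt E\}$, $\bar{\bar z}=z$, $\overline{x_1\cdots x_n}=\bar x_n\cdots\bar x_1$, $\varepsilon$ the empty string. For $s=x_1\cdots x_n$, $w\mathcal{E}_s u$ abbreviates edge atoms $w\mathcal{E}_{x_1}v_1,\dots,v_{n-1}\mathcal{E}_{x_n}u$ for some vertices $v_i$, with $v\mathcal E_{\bar a}z$ meaning $z\mathcal E_a v$ and $w\mathcal E_\varepsilon u$ meaning $w=u$. A forward Horn rule $h_f$ (for $a\in\mathtt E$, string $s$) has premise $\Gamma,w\mathcal{E}_s u,w\mathcal{E}_a u\vdash\Delta$ and conclusion $\Gamma,w\mathcal{E}_s u\vdash\Delta$; a backward Horn rule $h_b$ is the same with $w\mathcal{E}_a u$ replaced by $u\mathcal{E}_a w$. Their grammars are $\mathbf{G}(h_f)=\{a\longrightarrow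 s,\bar a\longrightarrow\bar s\}$, $\mathbf{G}(h_b)=\{\bar a\longrightarrow s,a\longrightarrow\bar s\}$; for a production rule $p=x\longrightarrow t$ set $\bar p=\bar x\longrightarrow\bar t$; $(p,\bar p)$ is a production pair, and $P(\mathbf G)$ is the set of production pairs of a rule set $\mathbf G$ closed under $p\mapsto\bar p$; $P(h):=P(\mathbf G(h))$. Dependency graph: for distinct production pairs $(p,\bar p),(p',\bar p')$ with $p=x\longrightarrow s$, $p'=y\longrightarrow t$, $(p',\bar p')$ depends on $(p,\bar p)$, written $(p,\bar p)\sqsubset(p',\bar p')$, iff $s$ or $\bar s$ has the form $s_1ys_2$. $\sqsubseteq$ is the reflexive-transitive closure of $\sqsubset$. For a set $\mathrm H$ of Horn rules, $\mathsf{DG}(\mathrm H)=(\mathrm H,\sqsubseteq')$ where $h\sqsubseteq' h'$ iff $(p,\bar p)\sqsubseteq(p',\bar p')$ for $(p,\bar p)\in P(h)$, $(p',\bar p')\in P(h')$ (in the dependency relation of the union of the grammars of $\mathrm H$). In a dependency graph $(V,\sqsubseteq)$, a subset $V'\subseteq V$ is fracturable iff there are no $v\in V'$, $v'\in V\setminus V'$ with $v\sqsubseteq v'$; $V''$ is anti-fracturable iff $V''=V\setminus V'$ for some fracturable $V'$. Permutation: $\mathrm{R}_1$ permutes above $\mathrm{R}_2$ iff whenever $\mathcal{G}$ is obtained from g-sequents $\mathcal{G}_1,\dots,\mathcal{G}_n$ by an application of some $\sigma\in\mathrm{R}_2$ followed by an application of some $\rho\in\mathrm{R}_1$, then $\mathcal{G}$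 can be obtained from $\mathcal{G}_1,\dots,\mathcal{G}_n$ by applications of $\rho$ followed by an application of $\sigma$. *)

theory Defs
  imports Main "HOL-Library.Countable"
begin

(* E a = a, B a = \<bar>a (the formal inverse of the edge type a) *)
datatype 'e letter = E 'e | B 'e

fun bar :: "'e letter \<Rightarrow> 'e letter" where
  "bar (E a) = B a"
| "bar (B a) = E a"

definition barw :: "'e letter list \<Rightarrow> 'e letter list" where
  "barw s = rev (map bar s)"

(* A g-sequent  \<Gamma> \<turnstile> \<Delta> : \<Gamma> is the set of edge atoms (w, a, u) meaning w E_a u,
   \<Delta> is the set of prefixed sequents (w, S) meaning w : S. *)
type_synonym ('v, 'e, 's) gseq = "('v \<times> 'e \<times> 'v) set \<times> ('v \<times> 's) set"

definition gseq_ok :: "('v, 'e, 's) gseq \<Rightarrow> bool" where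
  "gseq_ok G \<longleftrightarrow> finite (fst G) \<and> finite (snd G)"

fun atom :: "('v \<times> 'e \<times> 'v) set \<Rightarrow> 'v \<Rightarrow> 'e letter \<Rightarrow> 'v \<Rightarrow> bool" where
  "atom \<Gamma> w (E a) v \<longleftrightarrow> (w, a, v) \<in> \<Gamma>"
| "atom \<Gamma> w (B a) v \<longleftrightarrow> (v, a, w) \<in> \<Gamma>"

fun path :: "('v \<times> 'e \<times> 'v) set \<Rightarrow> 'v \<Rightarrow> 'e letter list \<Rightarrow> 'v \<Rightarrow> bool" where
  "path \<Gamma> w [] u \<longleftrightarrow> w = u"
| "path \<Gamma> w (x # s) u \<longleftrightarrow> (\<exists>v. atom \<Gamma> w x v \<and> path \<Gamma> v s u)"

datatype 'e horn = HornF 'e "'e letter list" | HornB 'e "'e letter list"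

(* Premise  \<Gamma>, w E_s u, w E_a u \<turnstile> \<Delta>   (resp. u E_a w), conclusion  \<Gamma>, w E_s u \<turnstile> \<Delta>;
   commas are disjoint unions, so the added atom is not already in the conclusion. *)
definition horn_app :: "'e horn \<Rightarrow> ('v, 'e, 's) gseq \<Rightarrow> ('v, 'e, 's) gseq \<Rightarrow> bool" where
  "horn_app h P C \<longleftrightarrow>
     (case h of
        HornF a s \<Rightarrow> (\<exists>w u. path (fst C) w s u \<and> (w, a, u) \<notin> fst C
                              \<and> P = (insert (w, a, u) (fst C), snd C))
      | HornB a s \<Rightarrow> (\<exists>w u. path (fst C) w s u \<and> (u, a, w) \<notin> fst C
                              \<and> P = (insert (u, a, w) (fst C), snd C)))"

type_synonym 'e production = "'e letter \<times> 'e letter list"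

definition barp :: "'e production \<Rightarrow> 'e production" where
  "barp p = (bar (fst p), barw (snd p))"

fun grammar :: "'e horn \<Rightarrow> 'e production set" where
  "grammar (HornF a s) = {(E a, s), (B a, barw s)}"
| "grammar (HornB a s) = {(B a, s), (E a, barw s)}"

definition ppairs :: "'e production set \<Rightarrow> ('e production \<times> 'e production) set" where
  "ppairs G = {(p, barp p) | p. p \<in> G}"

definition ppairs_h :: "'e horn \<Rightarrow> ('e production \<times> 'e production) set" where
  "ppairs_h h = ppairs (grammar h)"

definition dep_step :: "'e production set \<Rightarrow> ('e production \<times> 'e production)
                         \<Rightarrow> ('e production \<times> 'e production) \<Rightarrow> bool" where
  "dep_step G pp pp' \<longleftrightarrow> pp \<in> ppairs G \<and> pp' \<in> ppairs G \<and> pp \<noteq> pp' \<and>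
     (fst (fst pp') \<in> set (snd (fst pp)) \<or> fst (fst pp') \<in> set (barw (snd (fst pp))))"

definition dep :: "'e production set \<Rightarrow> ('e production \<times> 'e production)
                    \<Rightarrow> ('e production \<times> 'e production) \<Rightarrow> bool" where
  "dep G = (dep_step G)\<^sup>*\<^sup>*"

definition dg_le :: "'e horn set \<Rightarrow> 'e horn \<Rightarrow> 'e horn \<Rightarrow> bool" where
  "dg_le H h h' \<longleftrightarrow> (\<exists>pp \<in> ppairs_h h. \<exists>pp' \<in> ppairs_h h'.
       dep (\<Union>g \<in> H. grammar g) pp pp')"

definition fracturable :: "'a set \<Rightarrow> ('a \<Rightarrow> 'a \<Rightarrow> bool) \<Rightarrow> 'a set \<Rightarrow> bool" where
  "fracturable V le V' \<longleftrightarrow> V' \<subseteq> V \<and> \<not> (\<exists>v \<in> V'. \<exists>v' \<in> V - V'. le v v')"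

(* R1 permutes above R2 (Horn rules are single-premise, so n = 1):
   whenever G is obtained from G1 by \<sigma> \<in> R2 followed by \<rho> \<in> R1, then G is obtained
   from G1 by an application of \<rho> followed by an application of \<sigma>. *)
definition permutes_above :: "'e horn set \<Rightarrow> 'e horn set \<Rightarrow> ('v \<times> 's) itself \<Rightarrow> bool" where
  "permutes_above R1 R2 _ \<longleftrightarrow>
     (\<forall>\<sigma> \<in> R2. \<forall>\<rho> \<in> R1. \<forall>(G1 :: ('v, 'e, 's) gseq) G' G.
        gseq_ok G1 \<and> gseq_ok G' \<and> gseq_ok G \<and> horn_app \<sigma> G1 G' \<and> horn_app \<rho> G' G
        \<longrightarrow> (\<exists>G''. gseq_ok G'' \<and> horn_app \<rho> G1 G'' \<and> horn_app \<sigma> G'' G))"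

end

theory Submission
  imports Defs
begin

fun ltype :: "'e letter \<Rightarrow> 'e" where
  "ltype (E a) = a" | "ltype (B a) = a"

fun hstr :: "'e horn \<Rightarrow> 'e letter list" where
  "hstr (HornF a s) = s" | "hstr (HornB a s) = s"

fun hty :: "'e horn \<Rightarrow> 'e" where
  "hty (HornF a s) = a" | "hty (HornB a s) = a"

fun hedge :: "'e horn \<Rightarrow> 'v \<Rightarrow> 'v \<Rightarrow> ('v \<times> 'e \<times> 'v)" where
  "hedge (HornF a s) w u = (w, a, u)" | "hedge (HornB a s) w u = (u, a, w)"

fun hlhs :: "'e horn \<Rightarrow> 'e letter" where
  "hlhs (HornF a s) = E a" | "hlhs (HornB a s) = B a"

lemma horn_app_iff:
  "horn_app h P C \<longleftrightarrow> (\<exists>w u. path (fst C) w (hstr h) u \<and> hedge h w u \<notin> fst C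
     \<and> P = (insert (hedge h w u) (fst C), snd C))"
  by (cases h) (auto simp: horn_app_def)

lemma hedge_ty: "fst (snd (hedge h w u)) = hty h"
  by (cases h) auto

lemma path_mono: "path \<Gamma> v s z \<Longrightarrow> \<Gamma> \<subseteq> \<Gamma>' \<Longrightarrow> path \<Gamma>' v s z"
proof (induction s arbitrary: v)
  case Nil then show ?case by simp
next
  case (Cons x s)
  then obtain y where "atom \<Gamma> v x y" "path \<Gamma> y s z" by auto
  moreover have "atom \<Gamma>' v x y" using \<open>atom \<Gamma> v x y\<close> Cons.prems(2)
    by (cases x) auto
  ultimately show ?case using Cons by auto
qed

lemma path_drop:
  "path (insert e \<Gamma>) v s z \<Longrightarrow> \<forall>x\<in>set s. ltype x \<noteq> fst (snd e) \<Longrightarrow> path \<Gamma> v s z"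
proof (induction s arbitrary: v)
  case Nil then show ?case by simp
next
  case (Cons x s)
  then obtain y where y: "atom (insert e \<Gamma>) v x y" "path (insert e \<Gamma>) y s z" by auto
  have "atom \<Gamma> v x y" using y(1) Cons.prems(2)
    by (cases x; cases e) auto
  then show ?case using Cons y by auto
qed

lemma grammar_lhs: "(hlhs h, hstr h) \<in> grammar h"
  by (cases h) auto

lemma grammar_has: "ltype x = hty h \<Longrightarrow> \<exists>p \<in> grammar h. fst p = x"
  by (cases h; cases x) auto

lemma dep_key:
  assumes "\<sigma> \<in> H" "\<rho> \<in> H" "x \<in> set (hstr \<sigma>)" "ltype x = hty \<rho>"
  shows "dg_le H \<sigma> \<rho>"
proof -
  let ?G = "\<Union>g \<in> H. grammar g"
  define p where "p = (hlhs \<sigma>, hstr \<sigma>)"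
  obtain p' where p': "p' \<in> grammar \<rho>" "fst p' = x" using grammar_has[OF assms(4)] by blast
  have pp: "(p, barp p) \<in> ppairs_h \<sigma>" unfolding ppairs_h_def ppairs_def p_def
    using grammar_lhs by blast
  have pp': "(p', barp p') \<in> ppairs_h \<rho>" unfolding ppairs_h_def ppairs_def using p' by blast
  have "dep ?G (p, barp p) (p', barp p')"
  proof (cases "(p, barp p) = (p', barp p')")
    case True then show ?thesis unfolding dep_def by simp
  next
    case False
    have "(p, barp p) \<in> ppairs ?G" unfolding ppairs_def p_def using grammar_lhs assms(1) by blast
    moreover have "(p', barp p') \<in> ppairs ?G" unfolding ppairs_def using p' assms(2) by blast
    ultimately have "dep_step ?G (p, barp p) (p', barp p')"
      unfolding dep_step_def using False p' assms(3) p_def by auto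
    then show ?thesis unfolding dep_def by auto
  qed
  then show ?thesis unfolding dg_le_def using pp pp' by blast
qed

theorem mainTheorem5:
  fixes H H' :: "('e :: finite) horn set"
  assumes "infinite (UNIV :: ('s :: countable) set)"
    and "fracturable H (dg_le H) H'"
  shows "permutes_above (H - H') H' TYPE('v \<times> 's)"
  unfolding permutes_above_def
proof (intro ballI allI impI)
  fix \<sigma> \<rho> and G1 G' G :: "('v, 'e, 's) gseq"
  assume s: "\<sigma> \<in> H'" and r: "\<rho> \<in> H - H'"
    and h: "gseq_ok G1 \<and> gseq_ok G' \<and> gseq_ok G \<and> horn_app \<sigma> G1 G' \<and> horn_app \<rho> G' G"
  from h obtain w u where wu: "path (fst G') w (hstr \<sigma>) u" "hedge \<sigma> w u \<notin> fst G'"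
     "G1 = (insert (hedge \<sigma> w u) (fst G'), snd G')" unfolding horn_app_iff by blast
  from h obtain w' u' where wu': "path (fst G) w' (hstr \<rho>) u'" "hedge \<rho> w' u' \<notin> fst G"
     "G' = (insert (hedge \<rho> w' u') (fst G), snd G)" unfolding horn_app_iff by blast
  have sH: "\<sigma> \<in> H" using s assms(2) unfolding fracturable_def by blast
  have nd: "\<not> dg_le H \<sigma> \<rho>" using s r assms(2) unfolding fracturable_def by blast
  have "\<forall>x\<in>set (hstr \<sigma>). ltype x \<noteq> fst (snd (hedge \<rho> w' u'))"
    using dep_key[OF sH _ _ _] r nd hedge_ty by fastforce
  then have pG: "path (fst G) w (hstr \<sigma>) u"
    using path_drop wu(1) wu'(3) by fastforce
  define G'' where "G'' = (insert (hedge \<sigma> w u) (fst G), snd G)"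
  have "gseq_ok G''" using h wu'(3) unfolding gseq_ok_def G''_def by auto
  moreover have "horn_app \<rho> G1 G''" unfolding horn_app_iff G''_def
  proof (intro exI conjI)
    show "path (fst (insert (hedge \<sigma> w u) (fst G), snd G)) w' (hstr \<rho>) u'"
      using path_mono[OF wu'(1)] by auto
    show "hedge \<rho> w' u' \<notin> fst (insert (hedge \<sigma> w u) (fst G), snd G)"
      using wu wu' by auto
    show "G1 = (insert (hedge \<rho> w' u') (fst (insert (hedge \<sigma> w u) (fst G), snd G)),
         snd (insert (hedge \<sigma> w u) (fst G), snd G))" using wu wu' by auto
  qed
  moreover have "horn_app \<sigma> G'' G" unfolding horn_app_iff G''_def
    using wu wu' pG by auto
  ultimately show "\<exists>G''. gseq_ok G'' \<and> horn_app \<rho> G1 G'' \<and> horn_app \<sigma> G'' G" by blast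
qed

end
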